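(* Let $A\in\{0,1\}^{N\times n}$ be such that every row has exactly $k$ ones, and let $\mathcal{C}_A=\{\{i\in[n]:A_{ji}=1\}: j\in[N]\}$ be the family of row supports. Suppose $U_1,\dots,U_N,V_1,\dots,V_n\in\mathbb{R}^d$ form a margin-$m$, relative-bias-$0$ embedding of $A$ with $m>0$. Fix $\alpha\in(0,1/2]$ and set $s=\lfloor\alpha k\rfloor$, and assume $s\ge1$. Let $\mathcal{F}_s(A)$ be a family of $s$-element subsets of $[n]$ such that for all distinct $T,T'\in\mathcal{F}_s(A)$, $|T\cap T'|<\frac s2$ and $T\cup T'$ is shattered by $\mathcal{C}_A$. Then $$d\ \ge\ \frac{\log|\mathcal{F}_s(A)|}{\log\bigl(1+\frac{2}{m\sqrt{s}}\bigr)}.$$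
   Context: For $A\in\{0,1\}^{N\times n}$ and $m\ge0$, unit vectors $U_1,\dots,U_N,V_1,\dots,V_n\in\mathbb{R}^d$ form a margin-$m$, relative-bias-$0$ embedding of $A$ if $\langle U_j,V_i\rangle\ge m$ whenever $A_{ji}=1$ and $\langle U_j,V_i\rangle\le -m$ whenever $A_{ji}=0$. A set $B\subseteq[n]$ is shattered by a family $\mathcal{S}$ of subsets of $[n]$ if for every $C\subseteq B$ there is $S'\in\mathcal{S}$ with $S'\cap B=C$. *)

theory Defs
  imports "HOL-Analysis.Analysis"
begin

text \<open>A 0/1 matrix of size N x n is modelled as a predicate A j i (true iff the entry is 1),
  with rows j < N and columns i < n; [n] is rendered as {..<n}.\<close>

definition row_supports :: "nat \<Rightarrow> nat \<Rightarrow> (nat \<Rightarrow> nat \<Rightarrow> bool) \<Rightarrow> nat set set" where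
  "row_supports N n A = (\<lambda>j. {i \<in> {..<n}. A j i}) ` {..<N}"

definition shatters :: "'a set set \<Rightarrow> 'a set \<Rightarrow> bool" where
  "shatters S B \<longleftrightarrow> (\<forall>C \<subseteq> B. \<exists>S' \<in> S. S' \<inter> B = C)"

definition margin_embedding ::
  "nat \<Rightarrow> nat \<Rightarrow> (nat \<Rightarrow> nat \<Rightarrow> bool) \<Rightarrow> real \<Rightarrow> (nat \<Rightarrow> real ^ 'd) \<Rightarrow> (nat \<Rightarrow> real ^ 'd) \<Rightarrow> bool" where
  "margin_embedding N n A m U V \<longleftrightarrow>
     (\<forall>j<N. norm (U j) = 1) \<and> (\<forall>i<n. norm (V i) = 1) \<and>
     (\<forall>j<N. \<forall>i<n. (A j i \<longrightarrow> inner (U j) (V i) \<ge> m) \<and> (\<not> A j i \<longrightarrow> inner (U j) (V i) \<le> - m))"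

end

theory Submission
  imports Defs
begin

lemma packing:
  fixes P :: "'a::euclidean_space set" and \<delta> :: real
  assumes fin: "finite P" and nb: "\<forall>x\<in>P. norm x \<le> 1" and d: "\<delta> > 0"
    and sep: "\<forall>x\<in>P. \<forall>y\<in>P. x \<noteq> y \<longrightarrow> dist x y \<ge> \<delta>"
  shows "real (card P) \<le> (1 + 2/\<delta>) ^ DIM('a)"
proof -
  define r where "r = \<delta>/2"
  have r: "r > 0" using d by (simp add: r_def)
  define c where "c = measure lborel (ball (0::'a) 1)"
  have c: "c > 0" by (simp add: c_def)
  have disj: "disjoint_family_on (\<lambda>x. ball x r) P"
    unfolding disjoint_family_on_def
  proof (intro ballI impI)
    fix x y assume xy: "x \<in> P" "y \<in> P" "x \<noteq> y"
    show "ball x r \<inter> ball y r = {}"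
    proof (rule ccontr)
      assume "ball x r \<inter> ball y r \<noteq> {}"
      then obtain z where "dist x z < r" "dist y z < r" by auto
      moreover have "dist x y \<le> dist x z + dist z y" by (rule dist_triangle)
      moreover have "dist z y = dist y z" by (rule dist_commute)
      ultimately have "dist x y < 2*r" by linarith
      with sep xy show False by (force simp: r_def)
    qed
  qed
  have sub: "(\<Union>x\<in>P. ball x r) \<subseteq> ball 0 (1 + r)"
  proof
    fix z assume "z \<in> (\<Union>x\<in>P. ball x r)"
    then obtain x where x: "x \<in> P" "dist x z < r" by auto
    have "norm (x - (x - z)) \<le> norm x + norm (x - z)" by (rule norm_triangle_ineq4)
    then have "norm z \<le> norm x + dist x z" by (simp add: dist_norm)
    then show "z \<in> ball 0 (1+r)" using x nb by auto
  qed
  have bx: "measure lborel (ball x r) = r ^ DIM('a) * c" for x :: 'a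
    unfolding c_def by (rule content_ball_conv_unit_ball) (use r in simp)
  have fb: "\<And>x. emeasure lborel (ball (x::'a) r) \<noteq> \<infinity>"
    by (rule less_imp_neq[OF emeasure_lborel_ball_finite])
  have "measure lborel (\<Union>x\<in>P. ball x r) = (\<Sum>x\<in>P. measure lborel (ball x r))"
    by (rule measure_finite_Union) (use fin disj fb in auto)
  also have "\<dots> = real (card P) * (r ^ DIM('a) * c)"
    using bx by simp
  finally have eq: "measure lborel (\<Union>x\<in>P. ball x r) = real (card P) * (r ^ DIM('a) * c)" .
  have "measure lborel (\<Union>x\<in>P. ball x r) \<le> measure lborel (ball (0::'a) (1+r))"
  proof (rule measure_mono_fmeasurable[OF sub])
    show "(\<Union>x\<in>P. ball x r) \<in> sets lborel" by (simp add: borel_open open_UN)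
    show "ball (0::'a) (1+r) \<in> fmeasurable lborel"
      unfolding fmeasurable_def using emeasure_lborel_ball_finite[of "0::'a" "1+r"] by simp
  qed
  also have "\<dots> = (1+r) ^ DIM('a) * c" unfolding c_def
    by (rule content_ball_conv_unit_ball) (use r in simp)
  finally have "real (card P) * r ^ DIM('a) \<le> (1+r) ^ DIM('a)" using eq c by simp
  then have "real (card P) \<le> (1+r) ^ DIM('a) / r ^ DIM('a)" using r by (simp add: field_simps)
  also have "\<dots> = ((1+r)/r) ^ DIM('a)" by (simp add: power_divide)
  also have "(1+r)/r = 1 + 2/\<delta>" using r by (simp add: r_def field_simps)
  finally show ?thesis .
qed

lemma signs:
  fixes V :: "nat \<Rightarrow> 'a::real_inner"
  assumes "finite T"
  shows "\<exists>e. (\<forall>i. e i = 1 \<or> e i = -1) \<and> (norm (\<Sum>i\<in>T. e i *\<^sub>R V i))^2 \<le> (\<Sum>i\<in>T. (norm (V i))^2)"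
  using assms
proof (induction T rule: finite_induct)
  case empty
  show ?case by (rule exI[of _ "\<lambda>_. 1"]) simp
next
  case (insert a T)
  then obtain e where e: "\<forall>i. e i = 1 \<or> e i = -1" and
    b: "(norm (\<Sum>i\<in>T. e i *\<^sub>R V i))^2 \<le> (\<Sum>i\<in>T. (norm (V i))^2)" by blast
  define w where "w = (\<Sum>i\<in>T. e i *\<^sub>R V i)"
  define t where "t = (if inner w (V a) \<le> 0 then (1::real) else -1)"
  define e' where "e' = e(a := t)"
  have "(\<Sum>i\<in>T. e' i *\<^sub>R V i) = w" unfolding w_def e'_def
    using insert by (intro sum.cong) auto
  then have s: "(\<Sum>i\<in>insert a T. e' i *\<^sub>R V i) = t *\<^sub>R V a + w"
    using insert by (simp add: e'_def)
  have "(norm (t *\<^sub>R V a + w))^2 = t^2 * (norm (V a))^2 + 2 * (t * inner (V a) w) + (norm w)^2"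
    unfolding power2_norm_eq_inner by (simp add: inner_add_left inner_add_right inner_commute algebra_simps power2_eq_square)
  also have "t^2 = 1" by (simp add: t_def)
  also have "t * inner (V a) w \<le> 0" by (simp add: t_def inner_commute)
  finally have "(norm (t *\<^sub>R V a + w))^2 \<le> (norm (V a))^2 + (norm w)^2" by simp
  then have "(norm (\<Sum>i\<in>insert a T. e' i *\<^sub>R V i))^2 \<le> (\<Sum>i\<in>insert a T. (norm (V i))^2)"
    using s b insert w_def by simp
  moreover have "\<forall>i. e' i = 1 \<or> e' i = -1" using e by (simp add: e'_def t_def)
  ultimately show ?case by blast
qed


theorem theoremF1:
  fixes N n k :: nat and A :: "nat \<Rightarrow> nat \<Rightarrow> bool"
    and U V :: "nat \<Rightarrow> real ^ 'd" and m \<alpha> :: real and s :: nat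
    and F :: "nat set set"
  assumes rows: "\<forall>j<N. card {i \<in> {..<n}. A j i} = k"
    and emb: "margin_embedding N n A m U V"
    and m_pos: "m > 0"
    and alpha: "0 < \<alpha>" "\<alpha> \<le> 1/2"
    and s_def: "s = nat \<lfloor>\<alpha> * real k\<rfloor>"
    and s_pos: "s \<ge> 1"
    and F_sub: "\<forall>T \<in> F. T \<subseteq> {..<n} \<and> card T = s"
    and F_pair: "\<forall>T \<in> F. \<forall>T' \<in> F. T \<noteq> T' \<longrightarrow>
                   real (card (T \<inter> T')) < real s / 2 \<and> shatters (row_supports N n A) (T \<union> T')"
  shows "real CARD('d) \<ge> ln (real (card F)) / ln (1 + 2 / (m * sqrt (real s)))"
proof -
  have Unorm: "\<forall>j<N. norm (U j) = 1" and Vnorm: "\<forall>i<n. norm (V i) = 1"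
    and Aemb: "\<forall>j<N. \<forall>i<n. (A j i \<longrightarrow> inner (U j) (V i) \<ge> m) \<and> (\<not> A j i \<longrightarrow> inner (U j) (V i) \<le> - m)"
    using emb unfolding margin_embedding_def by auto
  have finF: "finite F"
    by (rule finite_subset[of F "Pow {..<n}"]) (use F_sub in auto)
  have finT: "finite T" if "T \<in> F" for T
    using F_sub that finite_subset[of T "{..<n}"] by auto
  have sumV: "(\<Sum>i\<in>T. (norm (V i))^2) = real s" if "T \<in> F" for T
  proof -
    have "(\<Sum>i\<in>T. (norm (V i))^2) = (\<Sum>i\<in>T. 1)"
    proof (intro sum.cong refl)
      fix i assume "i \<in> T"
      then have "i < n" using F_sub that by auto
      then show "(norm (V i))^2 = 1" using Vnorm by simp
    qed
    then show ?thesis using F_sub that by simp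
  qed
  have "\<forall>T\<in>F. \<exists>e. (\<forall>i. e i = 1 \<or> e i = -1) \<and> (norm (\<Sum>i\<in>T. e i *\<^sub>R V i))^2 \<le> real s"
  proof
    fix T assume T: "T \<in> F"
    show "\<exists>e. (\<forall>i. e i = 1 \<or> e i = -1) \<and> (norm (\<Sum>i\<in>T. e i *\<^sub>R V i))^2 \<le> real s"
      using signs[OF finT[OF T], of V] sumV[OF T] by simp
  qed
  then obtain e where e: "\<forall>T\<in>F. (\<forall>i. e T i = 1 \<or> e T i = -1) \<and> (norm (\<Sum>i\<in>T. e T i *\<^sub>R V i))^2 \<le> real s"
    by (rule bchoice[THEN exE]) blast
  define y where "y T = (\<Sum>i\<in>T. e T i *\<^sub>R V i)" for T
  have ynorm: "norm (y T) \<le> sqrt (real s)" if "T \<in> F" for T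
    using e that unfolding y_def by (simp add: real_le_rsqrt)
  have key: "norm (y T - y T') > m * real s" if TF: "T \<in> F" "T' \<in> F" "T \<noteq> T'" for T T'
  proof -
    define c where "c i = (if i \<in> T then e T i else 0) - (if i \<in> T' then e T' i else 0)" for i
    define C where "C = {i \<in> T \<union> T'. c i > 0}"
    have ci: "real (card (T \<inter> T')) < real s / 2" and sh: "shatters (row_supports N n A) (T \<union> T')"
      using F_pair TF by auto
    have CB: "C \<subseteq> T \<union> T'" unfolding C_def by auto
    obtain S' where "S' \<in> row_supports N n A" "S' \<inter> (T \<union> T') = C"
      using sh[unfolded shatters_def, rule_format, OF CB] by blast
    then obtain j where j: "j < N" "{i \<in> {..<n}. A j i} \<inter> (T \<union> T') = C"
      unfolding row_supports_def by auto
    have TU: "T \<union> T' \<subseteq> {..<n}" using F_sub TF by auto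
    have Aiff: "A j i \<longleftrightarrow> c i > 0" if "i \<in> T \<union> T'" for i
    proof -
      have "i < n" using TU that by auto
      then show ?thesis using j(2) that unfolding C_def by blast
    qed
    have fin: "finite (T \<union> T')" using finT TF by auto
    have yT: "y T = (\<Sum>i\<in>T \<union> T'. (if i \<in> T then e T i else 0) *\<^sub>R V i)"
      unfolding y_def by (rule sum.mono_neutral_cong_right[symmetric]) (use fin in auto)
    have yT': "y T' = (\<Sum>i\<in>T \<union> T'. (if i \<in> T' then e T' i else 0) *\<^sub>R V i)"
      unfolding y_def by (rule sum.mono_neutral_cong_right[symmetric]) (use fin in auto)
    have diff: "y T - y T' = (\<Sum>i\<in>T \<union> T'. c i *\<^sub>R V i)"
      unfolding yT yT' c_def by (simp add: sum_subtractf[symmetric] scaleR_diff_left)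
    have trm: "c i * inner (U j) (V i) \<ge> m * \<bar>c i\<bar>" if i: "i \<in> T \<union> T'" for i
    proof (cases "c i > 0")
      case True
      then have "inner (U j) (V i) \<ge> m" using Aiff[OF i] Aemb j(1) TU i by auto
      then have "c i * inner (U j) (V i) \<ge> c i * m" using True by (intro mult_left_mono) auto
      then show ?thesis using True by (simp add: mult.commute)
    next
      case False
      then have "inner (U j) (V i) \<le> - m" using Aiff[OF i] Aemb j(1) TU i by auto
      then have "(- c i) * inner (U j) (V i) \<le> (- c i) * (- m)" using False by (intro mult_left_mono) auto
      then show ?thesis using False by (simp add: abs_if mult.commute)
    qed
    have "inner (U j) (y T - y T') = (\<Sum>i\<in>T \<union> T'. c i * inner (U j) (V i))"
      unfolding diff by (simp add: inner_sum_right)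
    also have "\<dots> \<ge> (\<Sum>i\<in>T \<union> T'. m * \<bar>c i\<bar>)" by (rule sum_mono) (use trm in auto)
    finally have inner_ge: "inner (U j) (y T - y T') \<ge> m * (\<Sum>i\<in>T \<union> T'. \<bar>c i\<bar>)"
      by (simp add: sum_distrib_left)
    have c1: "\<bar>c i\<bar> = 1" if "i \<in> (T - T') \<union> (T' - T)" for i
    proof (cases "i \<in> T")
      case True
      then have "c i = e T i" using that unfolding c_def by auto
      then show ?thesis using e TF(1) by (metis abs_minus_cancel abs_one)
    next
      case False
      then have "c i = - e T' i" using that unfolding c_def by auto
      then show ?thesis using e TF(2) by (metis abs_minus_cancel abs_one)
    qed
    have "(\<Sum>i\<in>T \<union> T'. \<bar>c i\<bar>) \<ge> (\<Sum>i\<in>(T - T') \<union> (T' - T). \<bar>c i\<bar>)"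
      by (rule sum_mono2) (use fin in auto)
    also have "(\<Sum>i\<in>(T - T') \<union> (T' - T). \<bar>c i\<bar>) = real (card ((T - T') \<union> (T' - T)))"
      using c1 by simp
    also have "card ((T - T') \<union> (T' - T)) = card (T - T') + card (T' - T)"
      by (rule card_Un_disjoint) (use fin in auto)
    finally have sum_ge: "(\<Sum>i\<in>T \<union> T'. \<bar>c i\<bar>) \<ge> real (card (T - T')) + real (card (T' - T))" by simp
    have cT: "card T = s" "card T' = s" using F_sub TF by auto
    have "card (T - T') = card T - card (T \<inter> T')"
      by (rule card_Diff_subset_Int) (use fin in auto)
    moreover have "card (T' - T) = card T' - card (T' \<inter> T)"
      by (rule card_Diff_subset_Int) (use fin in auto)
    moreover have "card (T \<inter> T') \<le> card T" "card (T' \<inter> T) \<le> card T'"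
      using fin by (auto intro: card_mono)
    ultimately have "real (card (T - T')) + real (card (T' - T)) = 2 * real s - 2 * real (card (T \<inter> T'))"
      using cT by (simp add: of_nat_diff Int_commute)
    with sum_ge ci have "(\<Sum>i\<in>T \<union> T'. \<bar>c i\<bar>) > real s" by linarith
    then have "m * (\<Sum>i\<in>T \<union> T'. \<bar>c i\<bar>) > m * real s" using m_pos by simp
    moreover have "inner (U j) (y T - y T') \<le> norm (y T - y T')"
      using norm_cauchy_schwarz[of "U j" "y T - y T'"] Unorm j(1) by simp
    ultimately show ?thesis using inner_ge by linarith
  qed
  define p where "p T = (1 / sqrt (real s)) *\<^sub>R y T" for T
  have sp: "sqrt (real s) > 0" using s_pos by simp
  have pdist: "dist (p T) (p T') > m * sqrt (real s)" if "T \<in> F" "T' \<in> F" "T \<noteq> T'" for T T'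
  proof -
    have "dist (p T) (p T') = norm (y T - y T') / sqrt (real s)"
      unfolding p_def dist_norm using sp
      by (simp add: scaleR_diff_right[symmetric] divide_inverse mult.commute)
    also have "\<dots> > m * real s / sqrt (real s)"
      using key[OF that] sp by (simp add: divide_strict_right_mono)
    also have "m * real s / sqrt (real s) = m * sqrt (real s)"
    proof -
      have "real s = sqrt (real s) * sqrt (real s)" by simp
      then show ?thesis using sp by (metis nonzero_mult_div_cancel_right less_irrefl mult.assoc times_divide_eq_right)
    qed
    finally show ?thesis .
  qed
  have inj: "inj_on p F"
  proof (rule inj_onI, rule ccontr)
    fix T T' assume "T \<in> F" "T' \<in> F" "p T = p T'" "T \<noteq> T'"
    moreover have "m * sqrt (real s) > 0" using m_pos sp by simp
    ultimately show False using pdist[of T T'] by simp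
  qed
  have pn: "\<forall>x\<in>p ` F. norm x \<le> 1"
  proof
    fix x assume "x \<in> p ` F"
    then obtain T where T: "T \<in> F" "x = p T" by auto
    have "norm x = norm (y T) / sqrt (real s)" using T sp by (simp add: p_def divide_inverse mult.commute)
    also have "\<dots> \<le> 1" using ynorm[OF T(1)] sp by simp
    finally show "norm x \<le> 1" .
  qed
  define \<delta> where "\<delta> = m * sqrt (real s)"
  have dpos: "\<delta> > 0" using m_pos sp by (simp add: \<delta>_def)
  have psep: "\<forall>x\<in>p ` F. \<forall>y\<in>p ` F. x \<noteq> y \<longrightarrow> dist x y \<ge> \<delta>"
  proof (intro ballI impI)
    fix x z assume "x \<in> p ` F" "z \<in> p ` F" "x \<noteq> z"
    then obtain T T' where "T \<in> F" "T' \<in> F" "x = p T" "z = p T'" "T \<noteq> T'" by auto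
    then show "dist x z \<ge> \<delta>" using pdist[of T T'] unfolding \<delta>_def by simp
  qed
  have "real (card (p ` F)) \<le> (1 + 2/\<delta>) ^ DIM(real ^ 'd)"
    by (rule packing) (use finF pn dpos psep in auto)
  then have cardle: "real (card F) \<le> (1 + 2/\<delta>) ^ CARD('d)"
    using card_image[OF inj] by simp
  have Bgt: "1 + 2/\<delta> > 1" using dpos by simp
  have lnB: "ln (1 + 2/\<delta>) > 0" using Bgt by (intro ln_gt_zero) auto
  have "ln (real (card F)) \<le> real CARD('d) * ln (1 + 2/\<delta>)"
  proof (cases "card F = 0")
    case True
    then show ?thesis using lnB by simp
  next
    case False
    then have "ln (real (card F)) \<le> ln ((1 + 2/\<delta>) ^ CARD('d))"
      using cardle by (subst ln_le_cancel_iff) auto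
    also have "\<dots> = real CARD('d) * ln (1 + 2/\<delta>)" using Bgt by (simp add: ln_realpow)
    finally show ?thesis .
  qed
  then show ?thesis using lnB unfolding \<delta>_def by (simp add: divide_le_eq)
qed

end
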